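(* Let $n>k\geq 3$ be odd integers and let $A$ be a cyclically $k$-diagonal $n\times n$ array. Let $E=\{e_1<e_2<\dots<e_t\}\subseteq[1,n]$, let $C=(1,\dots,1)\in\{-1,1\}^n$ and let $R=(r_1,\dots,r_n)\in\{-1,1\}^n$ with $r_i=-1$ if $i\in E$ and $r_i=1$ if $i\notin E$. Let $D_1=\{(d,d):d\in[1,n]\}$ be the main diagonal and let $F:D_1\to D_1$ send $(d,d)$ to the first cell of $D_1$ occurring in the sequence $CN_{RC}(d,d),CN_{RC}^2(d,d),\dots$. Define $\Theta(d)$ to be the element of $[1,n]$ congruent to $d-(k-1)$ modulo $n$, and (when $E\neq\emptyset$) $\Omega:E\to E$, $\Omega(e_s)=e_{s+(k-1)}$, subscripts read modulo $t$. Define $S_D:[1,n]\to[1,n]$ by $S_D(d)=\Theta(\Omega(d))$ if $d\in E$ and $S_D(d)=\Theta(d)$ otherwise. Then for every $d\in[1,n]$, $F(d,d)=(S_D(d),S_D(d))$.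
   Context: An $m\times n$ array is partially filled; $F(A)$ is its set of filled cells, every row and column contains at least one filled cell, and the array is toroidal (row indices mod $m$, column indices mod $n$). The row successor of $(i,j)\in F(A)$ is $s_R(i,j)=(i,j+t)$ with $t\ge1$ minimal such that this cell is filled; the column successor is $s_C(i,j)=(i+t,j)$ with $t\geq 1$ minimal such that it is filled; both are permutations of $F(A)$. For $R=(r_1,\dots,r_m)\in\{-1,1\}^m$, $C=(c_1,\dots,c_n)\in\{-1,1\}^n$, the Crazy Knight's move is $CN_{RC}(i,j)=s_C^{c_{j'}}(i,j')$ where $(i,j')=s_R^{r_i}(i,j)$. An $n\times n$ array is cyclically $k$-diagonal if its filled cells are exactly those $(i,j)$ with $i-j \bmod n\in\{0,1,\dots,k-1\}$ (the diagonals $D_1,\dots,D_k$, where $D_s=\{(s,1),(s+1,2),\dots,(s-1,n)\}$). *)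

theory Defs
  imports Main
begin

text \<open>Cells are pairs (row, column) of integers; row indices range over [1,m],
 column indices over [1,n]. Toroidal index reduction to the representative in [1,n].\<close>

definition wrap :: "int \<Rightarrow> int \<Rightarrow> int" where
  "wrap n x = (x - 1) mod n + 1"

definition row_succ :: "(int \<times> int) set \<Rightarrow> int \<Rightarrow> int \<times> int \<Rightarrow> int \<times> int" where
  "row_succ A n c = (case c of (i, j) \<Rightarrow>
     (i, wrap n (j + int (LEAST t::nat. t \<ge> 1 \<and> (i, wrap n (j + int t)) \<in> A))))"

definition col_succ :: "(int \<times> int) set \<Rightarrow> int \<Rightarrow> int \<times> int \<Rightarrow> int \<times> int" where
  "col_succ A m c = (case c of (i, j) \<Rightarrow>
     (wrap m (i + int (LEAST t::nat. t \<ge> 1 \<and> (wrap m (i + int t), j) \<in> A)), j))"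

definition perm_pow :: "('a \<Rightarrow> 'a) \<Rightarrow> 'a set \<Rightarrow> int \<Rightarrow> 'a \<Rightarrow> 'a" where
  "perm_pow f A r = (if r = 1 then f else the_inv_into A f)"

definition crazy_knight ::
  "(int \<times> int) set \<Rightarrow> int \<Rightarrow> int \<Rightarrow> (int \<Rightarrow> int) \<Rightarrow> (int \<Rightarrow> int) \<Rightarrow> int \<times> int \<Rightarrow> int \<times> int" where
  "crazy_knight A m n R C c = (case perm_pow (row_succ A n) A (R (fst c)) c of (i, j') \<Rightarrow>
     perm_pow (col_succ A m) A (C j') (i, j'))"

definition cyc_k_diag :: "int \<Rightarrow> int \<Rightarrow> (int \<times> int) set" where
  "cyc_k_diag n k = {(i, j). i \<in> {1..n} \<and> j \<in> {1..n} \<and> (i - j) mod n \<in> {0..k-1}}"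

definition main_diag :: "int \<Rightarrow> (int \<times> int) set" where
  "main_diag n = {(d, d) | d. d \<in> {1..n}}"

definition first_return :: "('a \<Rightarrow> 'a) \<Rightarrow> 'a set \<Rightarrow> 'a \<Rightarrow> 'a" where
  "first_return f D c = (f ^^ (LEAST s::nat. s \<ge> 1 \<and> (f ^^ s) c \<in> D)) c"

definition Theta :: "int \<Rightarrow> int \<Rightarrow> int \<Rightarrow> int" where
  "Theta n k d = wrap n (d - (k - 1))"

text \<open>Omega(e_s) = e_{s+(k-1)}, subscripts mod t, where E = {e_1 < ... < e_t}.
 The (0-based) position of x in E is the number of elements of E below x.\<close>

definition Omega :: "int set \<Rightarrow> int \<Rightarrow> int \<Rightarrow> int" where
  "Omega E k x = (let es = sorted_list_of_set E; t = length es;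
                      s = card {y \<in> E. y < x}
                  in es ! nat ((int s + (k - 1)) mod int t))"

definition S_D :: "int \<Rightarrow> int \<Rightarrow> int set \<Rightarrow> int \<Rightarrow> int" where
  "S_D n k E d = (if d \<in> E then Theta n k (Omega E k d) else Theta n k d)"

end

theory Submission
  imports Defs
begin


locale ck =
  fixes n k :: int and E :: "int set" and R C :: "int \<Rightarrow> int"
  assumes k3: "k \<ge> 3" and nk: "n > k" and oddk: "odd k"
    and Esub: "E \<subseteq> {1..n}" and C1: "\<forall>j. C j = 1"
    and Rdef: "\<forall>i. R i = (if i \<in> E then -1 else 1)"
begin

abbreviation "A \<equiv> cyc_k_diag n k"
abbreviation "K \<equiv> crazy_knight A n n R C"

definition cell :: "int \<Rightarrow> int \<Rightarrow> int \<times> int" where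
  "cell i d = (wrap n i, wrap n (i - d))"

lemma npos: "n > 0" using nk k3 by simp

lemma wrap_range: "wrap n x \<in> {1..n}"
proof -
  have a: "(x-1) mod n < n" "0 \<le> (x-1) mod n" using npos by simp_all
  then show ?thesis unfolding wrap_def by simp
qed

lemma wrap_mod: "wrap n x mod n = x mod n"
  unfolding wrap_def by (simp add: mod_add_left_eq) 

lemma wrap_eq: "wrap n x = wrap n y \<longleftrightarrow> x mod n = y mod n"
  unfolding wrap_def by (simp add: mod_eq_dvd_iff)

lemma wrap_id: "x \<in> {1..n} \<Longrightarrow> wrap n x = x"
  unfolding wrap_def by simp

lemma memA: "(wrap n a, wrap n b) \<in> A \<longleftrightarrow> (a - b) mod n \<le> k - 1"
proof -
  have "(wrap n a - wrap n b) mod n = (wrap n a mod n - wrap n b mod n) mod n"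
    by (rule mod_diff_eq[symmetric])
  also have "\<dots> = (a mod n - b mod n) mod n" by (simp only: wrap_mod)
  also have "\<dots> = (a - b) mod n" by (rule mod_diff_eq)
  finally have "(wrap n a - wrap n b) mod n = (a - b) mod n" .
  moreover have "(a - b) mod n \<ge> 0" using npos by simp
  ultimately show ?thesis using wrap_range unfolding cyc_k_diag_def by auto
qed

lemma cell_in_A: "0 \<le> d \<Longrightarrow> d \<le> k - 1 \<Longrightarrow> cell i d \<in> A"
  unfolding cell_def memA using nk by simp

lemma A_cell: "c \<in> A \<Longrightarrow> \<exists>i d. 0 \<le> d \<and> d \<le> k - 1 \<and> c = cell i d"
proof -
  assume c: "c \<in> A"
  obtain i j where ij: "c = (i, j)" by fastforce
  have r: "i \<in> {1..n}" "j \<in> {1..n}" "(i - j) mod n \<in> {0..k-1}"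
    using c ij unfolding cyc_k_diag_def by auto
  have "(i - (i - j) mod n) mod n = (i - (i - j)) mod n"
    by (rule mod_diff_right_eq)
  then have m: "(i - (i - j) mod n) mod n = j mod n" by simp
  have "wrap n (i - (i - j) mod n) = wrap n j" using m by (simp only: wrap_eq)
  also have "\<dots> = j" using r(2) by (rule wrap_id)
  finally have w: "wrap n (i - (i - j) mod n) = j" .
  have "c = cell i ((i - j) mod n)"
    unfolding cell_def ij using w wrap_id[OF r(1)] by simp
  moreover have "0 \<le> (i - j) mod n" "(i - j) mod n \<le> k - 1" using r(3) by auto
  ultimately show ?thesis by blast
qed

lemma cell_mod: assumes "i mod n = i' mod n" shows "cell i d = cell i' d"
proof -
  have "(i - d) mod n = (i' - d) mod n" using mod_diff_cong[OF assms refl] .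
  then show ?thesis using assms by (simp add: cell_def wrap_eq)
qed

lemma cell_eq: "0 \<le> d \<Longrightarrow> d < n \<Longrightarrow> 0 \<le> d' \<Longrightarrow> d' < n \<Longrightarrow>
   cell i d = cell i' d' \<longleftrightarrow> i mod n = i' mod n \<and> d = d'"
proof
  assume b: "0 \<le> d" "d < n" "0 \<le> d'" "d' < n" and e: "cell i d = cell i' d'"
  then have m: "i mod n = i' mod n" "(i - d) mod n = (i' - d') mod n"
    unfolding cell_def by (auto simp: wrap_eq)
  then have "n dvd (i - i') - ((i - d) - (i' - d'))"
    by (simp only: mod_eq_dvd_iff dvd_diff)
  also have "(i - i') - ((i - d) - (i' - d')) = d - d'" by simp
  finally have "d mod n = d' mod n" by (simp add: mod_eq_dvd_iff)
  then show "i mod n = i' mod n \<and> d = d'" using m b by simp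
next
  assume "i mod n = i' mod n \<and> d = d'"
  then show "cell i d = cell i' d'" using cell_mod by blast
qed


lemma cell_diag: "0 \<le> d \<Longrightarrow> d \<le> k - 1 \<Longrightarrow> cell i d \<in> main_diag n \<longleftrightarrow> d = 0"
proof
  assume b: "0 \<le> d" "d \<le> k - 1" and "cell i d \<in> main_diag n"
  then have "wrap n i = wrap n (i - d)" unfolding cell_def main_diag_def by auto
  then have "i mod n = (i - d) mod n" by (simp add: wrap_eq)
  then have "n dvd d" by (simp add: mod_eq_dvd_iff)
  moreover have dn: "d < n" using b nk by linarith
  have "d mod n = d" using b(1) dn by (rule mod_pos_pos_trivial)
  ultimately show "d = 0" by (metis dvd_eq_mod_eq_0)
next
  assume "d = 0"
  then have "cell i d = (wrap n i, wrap n i)" by (simp add: cell_def)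
  then show "cell i d \<in> main_diag n"
    unfolding main_diag_def using wrap_range[of i] by blast
qed

end

context ck begin

lemma wrap_add: "wrap n (wrap n x + y) = wrap n (x + y)"
  unfolding wrap_eq by (metis mod_add_left_eq wrap_mod)

lemma wrap_add2: "wrap n (y + wrap n x) = wrap n (y + x)"
  using wrap_add[of x y] by (simp add: add.commute)

lemma mod_char: "0 \<le> v \<Longrightarrow> v < n \<Longrightarrow> n dvd (x - v) \<Longrightarrow> x mod n = v"
  by (metis mod_eq_dvd_iff mod_pos_pos_trivial)

lemma row_succ_cell:
  assumes "0 \<le> d" "d \<le> k - 1"
  shows "row_succ A n (cell i d) = (if d \<ge> 1 then cell i (d - 1) else cell i (k - 1))"
proof -
  have mem: "(wrap n i, wrap n (wrap n (i - d) + int t)) \<in> A \<longleftrightarrow> (d - int t) mod n \<le> k - 1" for t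
  proof -
    have "(i - (wrap n (i - d) + int t)) mod n = (d - int t) mod n"
    proof -
      have "n dvd (i - d) - wrap n (i - d)" using wrap_mod[of "i - d"]
        by (metis mod_eq_dvd_iff)
      then show ?thesis unfolding mod_eq_dvd_iff
        by (metis (no_types, lifting) add_diff_cancel_left diff_diff_eq diff_diff_eq2 diff_add_cancel)
    qed
    then show ?thesis using memA[of i "wrap n (i - d) + int t"] by simp
  qed
  have rs: "row_succ A n (cell i d) = (wrap n i, wrap n (wrap n (i - d) + int (LEAST t::nat. t \<ge> 1 \<and> (d - int t) mod n \<le> k - 1)))"
    unfolding row_succ_def cell_def using mem by simp
  show ?thesis
  proof (cases "d \<ge> 1")
    case True
    have "(LEAST t::nat. t \<ge> 1 \<and> (d - int t) mod n \<le> k - 1) = 1"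
    proof (rule Least_equality)
      show "1 \<le> (1::nat) \<and> (d - int 1) mod n \<le> k - 1"
        using True assms nk by simp
    qed simp
    then show ?thesis using True rs unfolding cell_def by (simp add: wrap_add wrap_add2 algebra_simps)
  next
    case False
    then have d0: "d = 0" using assms by simp
    have "(LEAST t::nat. t \<ge> 1 \<and> (d - int t) mod n \<le> k - 1) = nat (n - k + 1)"
    proof (rule Least_equality)
      have "(d - int (nat (n - k + 1))) mod n = k - 1"
        using d0 nk k3 by (intro mod_char) auto
      then show "1 \<le> nat (n - k + 1) \<and> (d - int (nat (n - k + 1))) mod n \<le> k - 1"
        using nk by simp
    next
      fix y :: nat assume y: "1 \<le> y \<and> (d - int y) mod n \<le> k - 1"
      show "nat (n - k + 1) \<le> y"
      proof (rule ccontr)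
        assume "\<not> nat (n - k + 1) \<le> y"
        then have "int y \<le> n - k" by simp
        then have "(d - int y) mod n = n - int y" using y d0 nk k3
          by (intro mod_char) auto
        then show False using y \<open>int y \<le> n - k\<close> by simp
      qed
    qed
    moreover have "wrap n (wrap n i + int (nat (n - k + 1))) = wrap n (i - (k - 1))"
      using nk by (simp add: wrap_add wrap_eq mod_eq_dvd_iff)
    ultimately show ?thesis using False d0 rs unfolding cell_def by simp
  qed
qed

lemma col_succ_cell:
  assumes "0 \<le> d" "d \<le> k - 1"
  shows "col_succ A n (cell i d) = (if d < k - 1 then cell (i + 1) (d + 1) else cell (i - k + 1) 0)"
proof -
  have mem: "(wrap n (wrap n i + int t), wrap n (i - d)) \<in> A \<longleftrightarrow> (int t + d) mod n \<le> k - 1" for t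
  proof -
    have "((wrap n i + int t) - (i - d)) mod n = (int t + d) mod n"
    proof -
      have "n dvd wrap n i - i" using wrap_mod[of "i"]
        by (metis mod_eq_dvd_iff)
      moreover have "((wrap n i + int t) - (i - d)) - (int t + d) = wrap n i - i" by simp
      ultimately show ?thesis unfolding mod_eq_dvd_iff by simp
    qed
    then show ?thesis using memA[of "wrap n i + int t" "i - d"] by simp
  qed
  have cs: "col_succ A n (cell i d) = (wrap n (wrap n i + int (LEAST t::nat. t \<ge> 1 \<and> (int t + d) mod n \<le> k - 1)), wrap n (i - d))"
    unfolding col_succ_def cell_def using mem by simp
  show ?thesis
  proof (cases "d < k - 1")
    case True
    have "(LEAST t::nat. t \<ge> 1 \<and> (int t + d) mod n \<le> k - 1) = 1"
    proof (rule Least_equality)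
      have "(int 1 + d) mod n = 1 + d" using True assms nk by (intro mod_char) auto
      then show "1 \<le> (1::nat) \<and> (int 1 + d) mod n \<le> k - 1"
        using True by simp
    qed simp
    then show ?thesis using True cs unfolding cell_def by (simp add: wrap_add wrap_add2 algebra_simps)
  next
    case False
    then have d0: "d = k - 1" using assms by simp
    have "(LEAST t::nat. t \<ge> 1 \<and> (int t + d) mod n \<le> k - 1) = nat (n - k + 1)"
    proof (rule Least_equality)
      have "(int (nat (n - k + 1)) + d) mod n = 0"
        using d0 nk k3 by (intro mod_char) auto
      then show "1 \<le> nat (n - k + 1) \<and> (int (nat (n - k + 1)) + d) mod n \<le> k - 1"
        using nk k3 by simp
    next
      fix y :: nat assume y: "1 \<le> y \<and> (int y + d) mod n \<le> k - 1"
      show "nat (n - k + 1) \<le> y"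
      proof (rule ccontr)
        assume "\<not> nat (n - k + 1) \<le> y"
        then have "int y \<le> n - k" by simp
        then have "0 \<le> int y + d" "int y + d < n" using y d0 nk k3 by auto
        then have "(int y + d) mod n = int y + d"
          by (intro mod_char) auto
        then have "int y + d \<le> k - 1" using y by simp
        then show False using y d0 by linarith
      qed
    qed
    moreover have "wrap n (wrap n i + int (nat (n - k + 1))) = wrap n (i - k + 1)"
      using nk by (simp add: wrap_add wrap_eq mod_eq_dvd_iff)
    moreover have "wrap n (i - d) = wrap n (i - k + 1)"
      by (rule arg_cong[where f="wrap n"]) (simp add: d0)
    ultimately show ?thesis using False d0 cs unfolding cell_def by simp
  qed
qed

definition rs :: "int \<Rightarrow> int" where "rs d = (if d \<ge> 1 then d - 1 else k - 1)"

lemma inj_rs: "inj_on (row_succ A n) A"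
proof (rule inj_onI)
  fix x y assume x: "x \<in> A" and y: "y \<in> A" and e: "row_succ A n x = row_succ A n y"
  obtain i d where a: "0 \<le> d" "d \<le> k - 1" "x = cell i d" using A_cell[OF x] by blast
  obtain i' d' where b: "0 \<le> d'" "d' \<le> k - 1" "y = cell i' d'" using A_cell[OF y] by blast
  have "row_succ A n x = cell i (rs d)" using a row_succ_cell unfolding rs_def by simp
  moreover have "row_succ A n y = cell i' (rs d')" using b row_succ_cell unfolding rs_def by simp
  ultimately have "cell i (rs d) = cell i' (rs d')" using e by simp
  moreover have "0 \<le> rs d" "rs d < n" "0 \<le> rs d'" "rs d' < n" using a b nk k3 unfolding rs_def by auto
  ultimately have im: "i mod n = i' mod n" and "rs d = rs d'" using cell_eq by blast+
  have dd: "d = d'" using \<open>rs d = rs d'\<close> a b unfolding rs_def by (auto split: if_splits)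
  have "cell i d = cell i' d" using cell_mod[OF im] .
  then show "x = y" using a(3) b(3) dd by blast
qed

lemma inv_rs_cell:
  assumes "0 \<le> d" "d \<le> k - 1"
  shows "the_inv_into A (row_succ A n) (cell i d) = (if d < k - 1 then cell i (d + 1) else cell i 0)"
proof (cases "d < k - 1")
  case True
  have r: "row_succ A n (cell i (d + 1)) = cell i d" using row_succ_cell[of "d+1" i] True assms by simp
  have x: "cell i (d + 1) \<in> A" using True assms by (intro cell_in_A) auto
  show ?thesis using the_inv_into_f_eq[OF inj_rs r x] True by simp
next
  case False
  have r: "row_succ A n (cell i 0) = cell i d" using row_succ_cell[of 0 i] False assms k3 by simp
  have x: "cell i 0 \<in> A" using k3 by (intro cell_in_A) auto
  show ?thesis using the_inv_into_f_eq[OF inj_rs r x] False by simp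
qed

lemma K_cell:
  assumes "0 \<le> d" "d \<le> k - 1"
  shows "K (cell i d) = (if wrap n i \<in> E then
      (if d < k - 2 then cell (i + 1) (d + 2) else if d = k - 2 then cell (i - k + 1) 0 else cell (i + 1) 1)
    else (if d \<ge> 1 then cell (i + 1) d else cell (i - k + 1) 0))"
proof -
  have K1: "K c = col_succ A n (perm_pow (row_succ A n) A (R (fst c)) c)" for c
    unfolding crazy_knight_def
    by (cases "perm_pow (row_succ A n) A (R (fst c)) c") (simp add: perm_pow_def C1)
  have f: "fst (cell i d) = wrap n i" unfolding cell_def by simp
  show ?thesis
  proof (cases "wrap n i \<in> E")
    case True
    then have "K (cell i d) = col_succ A n (the_inv_into A (row_succ A n) (cell i d))"
      using K1 f Rdef by (simp add: perm_pow_def)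
    then show ?thesis using True assms k3
      by (auto simp: inv_rs_cell col_succ_cell algebra_simps)
  next
    case False
    then have "K (cell i d) = col_succ A n (row_succ A n (cell i d))"
      using K1 f Rdef by (simp add: perm_pow_def)
    then show ?thesis using False assms k3
      by (auto simp: row_succ_cell col_succ_cell algebra_simps)
  qed
qed

end

context ck begin

definition dist :: "int \<Rightarrow> nat" where "dist i = (LEAST u::nat. wrap n (i + int u) \<in> E)"
definition nextE :: "int \<Rightarrow> int" where "nextE i = wrap n (i + int (dist i))"
definition succE :: "int \<Rightarrow> int" where "succE e = nextE (e + 1)"

lemma dist_ex: assumes "E \<noteq> {}" shows "\<exists>u::nat. wrap n (i + int u) \<in> E"
proof -
  obtain e where e: "e \<in> E" using assms by blast
  have "wrap n (i + int (nat ((e - i) mod n))) = wrap n e"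
    using npos by (simp add: wrap_eq mod_add_right_eq)
  also have "\<dots> = e" using e Esub wrap_id by auto
  finally have h: "wrap n (i + int (nat ((e - i) mod n))) = e" .
  show ?thesis using h e by (intro exI[of _ "nat ((e - i) mod n)"]) simp
qed

lemma nextE_in: "E \<noteq> {} \<Longrightarrow> nextE i \<in> E"
  unfolding nextE_def dist_def using dist_ex LeastI_ex by metis

lemma dist_min: "u < dist i \<Longrightarrow> wrap n (i + int u) \<notin> E"
  unfolding dist_def using not_less_Least by blast

lemma nextE_mod: assumes "i mod n = i' mod n" shows "nextE i = nextE i'"
proof -
  have w: "wrap n (i + int u) = wrap n (i' + int u)" for u
    unfolding wrap_eq by (rule mod_add_cong[OF assms refl])
  then have "dist i = dist i'" unfolding dist_def by simp
  then show ?thesis unfolding nextE_def using w by simp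
qed

lemma nextE_mod_wrap: "nextE i mod n = (i + int (dist i)) mod n"
  unfolding nextE_def by (rule wrap_mod)

lemma nextE_wrap: "nextE i = wrap n (i + int (dist i))" by (simp add: nextE_def)

lemma walk:
  assumes "1 \<le> d" "d \<le> k - 1" "\<forall>v<u. wrap n (i + int v) \<notin> E"
  shows "(K ^^ u) (cell i d) = cell (i + int u) d"
  using assms(3)
proof (induction u)
  case 0 then show ?case by simp
next
  case (Suc u)
  have IH: "(K ^^ u) (cell i d) = cell (i + int u) d" using Suc by simp
  have nE: "wrap n (i + int u) \<notin> E" using Suc.prems by simp
  have "K (cell (i + int u) d) = cell (i + int u + 1) d"
    using K_cell[of d "i + int u"] assms(1,2) nE by simp
  then show ?case using IH by (simp add: algebra_simps)
qed

definition q :: "int \<Rightarrow> int" where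
  "q d = (if even d then k - d div 2 else (k - 1) div 2 - (d - 1) div 2)"

lemma q_pos: assumes "1 \<le> d" "d \<le> k - 1" shows "q d \<ge> 1"
proof -
  obtain a where a: "k = 2 * a + 1" using oddk by (metis oddE)
  show ?thesis
  proof (cases "even d")
    case True then obtain b where "d = 2 * b" by (metis evenE)
    then show ?thesis using a assms unfolding q_def by simp
  next
    case False then obtain b where "d = 2 * b + 1" by (metis oddE)
    then show ?thesis using a assms unfolding q_def by simp
  qed
qed
lemma q_step: assumes "1 \<le> d" "d < k - 2" shows "q (d + 2) = q d - 1"
proof -
  obtain a where a: "k = 2 * a + 1" using oddk by (metis oddE)
  show ?thesis
  proof (cases "even d")
    case True then obtain b where "d = 2 * b" by (metis evenE)
    then show ?thesis using a assms unfolding q_def by simp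
  next
    case False then obtain b where "d = 2 * b + 1" by (metis oddE)
    then show ?thesis using a assms unfolding q_def by simp
  qed
qed
lemma q_last: shows "q (k - 1) = q 1 + 1"
proof -
  obtain a where a: "k = 2 * a + 1" using oddk by (metis oddE)
  then show ?thesis unfolding q_def by simp
qed
lemma q_km2: shows "q (k - 2) = 1"
proof -
  obtain a where a: "k = 2 * a + 1" using oddk by (metis oddE)
  have "k - 2 = 2 * (a - 1) + 1" using a by simp
  then show ?thesis using a unfolding q_def by simp
qed

lemma q_2: "q 2 = k - 1"
  unfolding q_def by simp

lemma main:
  assumes En: "E \<noteq> {}"
  shows "\<forall>i d. 1 \<le> d \<and> d \<le> k - 1 \<and> q d = int r \<longrightarrow>
    (\<exists>m\<ge>1. (K ^^ m) (cell i d) = cell ((succE ^^ (r - 1)) (nextE i) - k + 1) 0 \<and>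
       (\<forall>s. 1 \<le> s \<and> s < m \<longrightarrow> (K ^^ s) (cell i d) \<notin> main_diag n))"
proof (induction r)
  case 0
  then show ?case using q_pos by fastforce
next
  case (Suc r0)
  show ?case
  proof (intro allI impI)
    fix i d assume a: "1 \<le> d \<and> d \<le> k - 1 \<and> q d = int (Suc r0)"
    define u where "u = dist i"
    define e where "e = i + int u"
    have we: "wrap n e = nextE i" unfolding e_def u_def nextE_def by simp
    have eE: "wrap n e \<in> E" using we nextE_in En by simp
    have w: "(K ^^ u) (cell i d) = cell e d"
      unfolding e_def using walk[of d u i] a dist_min u_def by simp
    have walkND: "(K ^^ s) (cell i d) \<notin> main_diag n" if "s \<le> u" for s
    proof -
      have "(K ^^ s) (cell i d) = cell (i + int s) d"
        using walk[of d s i] a dist_min u_def that by simp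
      then show ?thesis using cell_diag a by simp
    qed
    have Ku1: "(K ^^ (Suc u)) (cell i d) = K (cell e d)" using w by simp
    show "\<exists>m\<ge>1. (K ^^ m) (cell i d) = cell ((succE ^^ (Suc r0 - 1)) (nextE i) - k + 1) 0 \<and>
       (\<forall>s. 1 \<le> s \<and> s < m \<longrightarrow> (K ^^ s) (cell i d) \<notin> main_diag n)"
    proof (cases "d = k - 2")
      case True
      then have "r0 = 0" using a q_km2 by simp
      have "K (cell e d) = cell (e - k + 1) 0" using K_cell[of d e] True eE k3 by simp
      also have "\<dots> = cell (nextE i - k + 1) 0"
      proof (rule cell_mod)
        have "nextE i mod n = e mod n" using we wrap_mod[of e] by simp
        then have "(e + (1 - k)) mod n = (nextE i + (1 - k)) mod n"
          by (intro mod_add_cong) simp_all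
        then show "(e - k + 1) mod n = (nextE i - k + 1) mod n" by (simp add: algebra_simps)
      qed
      finally have "(K ^^ (Suc u)) (cell i d) = cell ((succE ^^ (Suc r0 - 1)) (nextE i) - k + 1) 0"
        using Ku1 \<open>r0 = 0\<close> by simp
      moreover have "\<forall>s. 1 \<le> s \<and> s < Suc u \<longrightarrow> (K ^^ s) (cell i d) \<notin> main_diag n"
        using walkND by simp
      ultimately show ?thesis by (intro exI[of _ "Suc u"]) simp
    next
      case False
      define d' where "d' = (if d < k - 2 then d + 2 else 1)"
      have d'b: "1 \<le> d'" "d' \<le> k - 1" using a False k3 oddk unfolding d'_def by auto
      have Kc: "K (cell e d) = cell (e + 1) d'"
        using K_cell[of d e] False eE a unfolding d'_def by auto
      have qd': "q d' = int r0"
      proof (cases "d < k - 2")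
        case True then show ?thesis using q_step a unfolding d'_def by simp
      next
        case False
        then have "d = k - 1" using a \<open>d \<noteq> k - 2\<close> by simp
        then show ?thesis using q_last a False unfolding d'_def by simp
      qed
      then have r0: "r0 \<ge> 1" using q_pos d'b by fastforce
      obtain m' where m': "m' \<ge> 1" "(K ^^ m') (cell (e + 1) d') = cell ((succE ^^ (r0 - 1)) (nextE (e + 1)) - k + 1) 0"
        "\<forall>s. 1 \<le> s \<and> s < m' \<longrightarrow> (K ^^ s) (cell (e + 1) d') \<notin> main_diag n"
        using Suc.IH d'b qd' by blast
      have "nextE (e + 1) = succE (nextE i)"
        unfolding succE_def
      proof (rule nextE_mod)
        have "nextE i mod n = e mod n" using we wrap_mod[of e] by simp
        then show "(e + 1) mod n = (nextE i + 1) mod n"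
          by (intro mod_add_cong) simp_all
      qed
      then have "(succE ^^ (r0 - 1)) (nextE (e + 1)) = (succE ^^ (Suc r0 - 1)) (nextE i)"
      proof -
        obtain r1 where r1: "r0 = Suc r1" using r0 by (cases r0) auto
        show ?thesis using \<open>nextE (e + 1) = succE (nextE i)\<close> unfolding r1
          by (simp only: funpow_Suc_right o_apply diff_Suc_1)
      qed
      have KK: "(K ^^ (s + Suc u)) (cell i d) = (K ^^ s) (cell (e + 1) d')" for s
      proof -
        have "(K ^^ (s + Suc u)) (cell i d) = (K ^^ s) ((K ^^ Suc u) (cell i d))"
          by (simp only: funpow_add o_apply)
        also have "\<dots> = (K ^^ s) (cell (e + 1) d')" by (simp only: Ku1 Kc)
        finally show ?thesis .
      qed
      have "(K ^^ (m' + Suc u)) (cell i d) = (K ^^ m') (cell (e + 1) d')" by (rule KK)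
      also have "\<dots> = cell ((succE ^^ (Suc r0 - 1)) (nextE i) - k + 1) 0"
        by (simp only: m'(2) \<open>(succE ^^ (r0 - 1)) (nextE (e + 1)) = _\<close>)
      finally have "(K ^^ (m' + Suc u)) (cell i d) = cell ((succE ^^ (Suc r0 - 1)) (nextE i) - k + 1) 0" .
      moreover have "(K ^^ s) (cell i d) \<notin> main_diag n" if "1 \<le> s" "s < m' + Suc u" for s
      proof -
        consider "s \<le> u" | "s = Suc u" | "s > Suc u" by linarith
        then show ?thesis
        proof cases
          case 1 then show ?thesis using walkND by simp
        next
          case 2 then show ?thesis using KK[of 0] cell_diag d'b by simp
        next
          case 3
          define s' where "s' = s - Suc u"
          have "s = s' + Suc u" "1 \<le> s'" "s' < m'" using 3 that unfolding s'_def by auto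
          then have "(K ^^ s) (cell i d) = (K ^^ s') (cell (e + 1) d')" using KK[of s'] by simp
          then show ?thesis using m'(3) \<open>1 \<le> s'\<close> \<open>s' < m'\<close> by simp
        qed
      qed
      ultimately show ?thesis using m'(1) by (intro exI[of _ "m' + Suc u"]) auto
    qed
  qed
qed

end

context ck begin

lemma succE_char:
  assumes yE: "y \<in> E" and minp: "\<forall>z\<in>E. (y - a) mod n \<le> (z - a) mod n"
  shows "nextE a = y"
proof -
  define u0 where "u0 = nat ((y - a) mod n)"
  have u0i: "int u0 = (y - a) mod n" using npos unfolding u0_def by simp
  have "(a + int u0) mod n = (a + (y - a)) mod n" unfolding u0i by (rule mod_add_right_eq)
  then have "(a + int u0) mod n = y mod n" by simp
  then have "wrap n (a + int u0) = wrap n y" by (simp only: wrap_eq)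
  also have "\<dots> = y" using yE Esub by (intro wrap_id) auto
  finally have wy: "wrap n (a + int u0) = y" .
  have "dist a = u0"
    unfolding dist_def
  proof (rule Least_equality)
    show "wrap n (a + int u0) \<in> E" using wy yE by simp
  next
    fix u assume "wrap n (a + int u) \<in> E"
    then have "(wrap n (a + int u) - a) mod n \<ge> (y - a) mod n" using minp by blast
    moreover have "(wrap n (a + int u) - a) mod n = ((a + int u) - a) mod n"
      by (rule mod_diff_cong[OF wrap_mod refl])
    moreover have "int u mod n \<le> int u" by (rule zmod_le_nonneg_dividend) simp
    ultimately show "u0 \<le> u" using u0i by simp
  qed
  then show ?thesis using wy unfolding nextE_def by simp
qed

abbreviation es where "es \<equiv> sorted_list_of_set E"

lemma finE: "finite E" using Esub finite_subset by blast

lemma es_set: "set es = E" using finE by simp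

lemma es_sorted: "sorted_wrt (<) es" by (rule strict_sorted_list_of_set)

lemma es_less: "a < length es \<Longrightarrow> b < length es \<Longrightarrow> es ! a < es ! b \<longleftrightarrow> a < b"
proof
  assume "a < length es" "b < length es" "es ! a < es ! b"
  then show "a < b"
    using sorted_wrt_nth_less[OF es_sorted, of b a] by (metis less_asym linorder_neqE_nat less_irrefl)
next
  assume "b < length es" "a < b"
  then show "es ! a < es ! b" using sorted_wrt_nth_less[OF es_sorted] by blast
qed

lemma es_le: "a < length es \<Longrightarrow> b < length es \<Longrightarrow> es ! a \<le> es ! b \<longleftrightarrow> a \<le> b"
  using es_less[of b a] by auto

lemma es_in: "a < length es \<Longrightarrow> es ! a \<in> E"
  using es_set nth_mem by blast

lemma E_es: "z \<in> E \<Longrightarrow> \<exists>l<length es. z = es ! l"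
  using es_set by (metis in_set_conv_nth)

lemma es_range: "a < length es \<Longrightarrow> 1 \<le> es ! a \<and> es ! a \<le> n"
  using subsetD[OF Esub es_in[of a]] by simp

lemma card_below: assumes j: "j < length es" shows "card {y \<in> E. y < es ! j} = j"
proof -
  have "{y \<in> E. y < es ! j} = (\<lambda>l. es ! l) ` {..<j}"
  proof
    show "{y \<in> E. y < es ! j} \<subseteq> (\<lambda>l. es ! l) ` {..<j}"
    proof
      fix y assume "y \<in> {y \<in> E. y < es ! j}"
      then obtain l where l: "l < length es" "y = es ! l" "es ! l < es ! j" using E_es by blast
      then have "l < j" using es_less j by blast
      then show "y \<in> (\<lambda>l. es ! l) ` {..<j}" using l by blast
    qed
  next
    show "(\<lambda>l. es ! l) ` {..<j} \<subseteq> {y \<in> E. y < es ! j}"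
      using es_in es_less j by auto
  qed
  moreover have "inj_on (\<lambda>l. es ! l) {..<j}"
  proof (rule inj_onI)
    fix a b assume "a \<in> {..<j}" "b \<in> {..<j}" "es ! a = es ! b"
    then show "a = b" using es_less[of a b] es_less[of b a] j by (auto simp: not_less_iff_gr_or_eq)
  qed
  ultimately show ?thesis by (simp add: card_image)
qed

lemma mod_neg: "- n < v \<Longrightarrow> v < 0 \<Longrightarrow> v mod n = v + n"
  by (intro mod_char) auto

lemma mod_nonneg: "0 \<le> v \<Longrightarrow> v < n \<Longrightarrow> v mod n = v"
  by simp

lemma succE_nth:
  assumes j: "j < length es"
  shows "succE (es ! j) = es ! ((j + 1) mod length es)"
proof -
  define t where "t = length es"
  define x where "x = es ! j"
  define y where "y = es ! ((j + 1) mod t)"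
  have tpos: "t > 0" using j t_def by simp
  have yE: "y \<in> E" unfolding y_def t_def using es_in tpos t_def by simp
  have xr: "1 \<le> x" "x \<le> n" using es_range j x_def by auto
  have yr: "1 \<le> y" "y \<le> n" using es_range tpos y_def t_def by auto
  have minp: "\<forall>z\<in>E. (y - (x + 1)) mod n \<le> (z - (x + 1)) mod n"
  proof
    fix z assume "z \<in> E"
    then obtain l where l: "l < t" "z = es ! l" using E_es t_def by blast
    have zr: "1 \<le> z" "z \<le> n" using es_range l t_def by auto
    show "(y - (x + 1)) mod n \<le> (z - (x + 1)) mod n"
    proof (cases "j + 1 < t")
      case True
      then have yy: "y = es ! (j + 1)" unfolding y_def by simp
      have "x < y" unfolding yy x_def using es_less[of j "j+1"] True t_def by simp
      then have ym: "(y - (x + 1)) mod n = y - (x + 1)" using yr xr by (intro mod_nonneg) auto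
      show ?thesis
      proof (cases "l \<le> j")
        case True
        then have "z \<le> x" unfolding x_def l using es_le[of l j] j l t_def by simp
        then have "(z - (x + 1)) mod n = z - (x + 1) + n" using zr xr \<open>x < y\<close> yr
          by (intro mod_neg) auto
        then show ?thesis using ym zr yr by simp
      next
        case False
        then have "y \<le> z" unfolding yy l using es_le[of "j+1" l] \<open>j + 1 < t\<close> l t_def by simp
        then have "(z - (x + 1)) mod n = z - (x + 1)" using zr xr \<open>x < y\<close>
          by (intro mod_nonneg) auto
        then show ?thesis using ym \<open>y \<le> z\<close> by simp
      qed
    next
      case False
      then have jt: "j + 1 = t" using j t_def by simp
      then have yy: "y = es ! 0" unfolding y_def by simp
      have "y \<le> z" unfolding yy l using es_le[of 0 l] l t_def by simp
      have "z \<le> x" unfolding x_def l using es_le[of l j] j l jt t_def by simp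
      show ?thesis
      proof (cases "y - (x + 1) = - n")
        case True
        then show ?thesis using npos by simp
      next
        case False
        then have "(y - (x + 1)) mod n = y - (x + 1) + n" using yr xr \<open>y \<le> z\<close> \<open>z \<le> x\<close>
          by (intro mod_neg) auto
        moreover have "(z - (x + 1)) mod n = z - (x + 1) + n" using False yr xr \<open>y \<le> z\<close> \<open>z \<le> x\<close>
          by (intro mod_neg) auto
        ultimately show ?thesis using \<open>y \<le> z\<close> by simp
      qed
    qed
  qed
  have "nextE (x + 1) = y" by (rule succE_char[OF yE minp])
  then show ?thesis unfolding succE_def x_def y_def t_def .
qed

lemma succE_pow:
  assumes j: "j < length es"
  shows "(succE ^^ m) (es ! j) = es ! ((j + m) mod length es)"
proof (induction m)
  case 0 then show ?case using j by simp
next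
  case (Suc m)
  have tpos: "length es > 0" using j by simp
  have "(succE ^^ Suc m) (es ! j) = succE (es ! ((j + m) mod length es))" using Suc by simp
  also have "\<dots> = es ! (((j + m) mod length es + 1) mod length es)"
    using succE_nth tpos by simp
  also have "((j + m) mod length es + 1) mod length es = (j + Suc m) mod length es"
    by (simp add: mod_Suc_eq)
  finally show ?case .
qed

lemma Omega_pow:
  assumes x: "x \<in> E"
  shows "Omega E k x = (succE ^^ nat (k - 1)) x"
proof -
  obtain j where j: "j < length es" "x = es ! j" using E_es x by blast
  have c: "card {y \<in> E. y < x} = j" using card_below j by simp
  have "(int j + (k - 1)) mod int (length es) = int ((j + nat (k - 1)) mod length es)"
    using k3 by (simp add: zmod_int)
  then have "Omega E k x = es ! ((j + nat (k - 1)) mod length es)"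
    unfolding Omega_def Let_def c by simp
  also have "\<dots> = (succE ^^ nat (k - 1)) x" using succE_pow j by simp
  finally show ?thesis .
qed

end


theorem proposition3p1:
  fixes n k :: int and E :: "int set" and R C :: "int \<Rightarrow> int"
  assumes "odd n" and "odd k" and "n > k" and "k \<ge> 3"
    and "E \<subseteq> {1..n}"
    and "\<forall>j. C j = 1"
    and "\<forall>i. R i = (if i \<in> E then -1 else 1)"
  shows "\<forall>d \<in> {1..n}.
     first_return (crazy_knight (cyc_k_diag n k) n n R C) (main_diag n) (d, d)
       = (S_D n k E d, S_D n k E d)"
proof -
  interpret ck n k E R C using assms by unfold_locales auto
  show ?thesis
  proof
    fix d assume d: "d \<in> {1..n}"
    have cd: "ck.cell n d 0 = (d, d)" using d wrap_id unfolding cell_def by simp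
    have cdiag: "ck.cell n i 0 \<in> main_diag n" for i using cell_diag[of 0 i] k3 by simp
    show "first_return (crazy_knight (cyc_k_diag n k) n n R C) (main_diag n) (d, d)
       = (S_D n k E d, S_D n k E d)"
    proof (cases "d \<in> E")
      case False
      have K1: "crazy_knight (cyc_k_diag n k) n n R C (d, d) = ck.cell n (d - k + 1) 0"
        using K_cell[of 0 d] wrap_id[OF d] False k3 cd by simp
      have L: "(LEAST s::nat. s \<ge> 1 \<and> (crazy_knight (cyc_k_diag n k) n n R C ^^ s) (d, d) \<in> main_diag n) = 1"
      proof (rule Least_equality)
        show "1 \<le> (1::nat) \<and> (crazy_knight (cyc_k_diag n k) n n R C ^^ 1) (d, d) \<in> main_diag n"
          using K1 cdiag by simp
      qed simp
      have "S_D n k E d = wrap n (d - k + 1)" using False unfolding S_D_def Theta_def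
        by (simp add: algebra_simps)
      then show ?thesis unfolding first_return_def L using K1 by (simp add: cell_def)
    next
      case True
      have En: "E \<noteq> {}" using True by blast
      have K1: "crazy_knight (cyc_k_diag n k) n n R C (d, d) = ck.cell n (d + 1) 2"
        using K_cell[of 0 d] wrap_id[OF d] True k3 cd by simp
      have q2: "q 2 = int (nat (k - 1))" using q_2 k3 by simp
      obtain m where m: "m \<ge> 1"
        "(crazy_knight (cyc_k_diag n k) n n R C ^^ m) (ck.cell n (d + 1) 2)
           = ck.cell n ((succE ^^ (nat (k - 1) - 1)) (nextE (d + 1)) - k + 1) 0"
        "\<forall>s. 1 \<le> s \<and> s < m \<longrightarrow> (crazy_knight (cyc_k_diag n k) n n R C ^^ s) (ck.cell n (d + 1) 2) \<notin> main_diag n"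
      proof -
        have h: "1 \<le> (2::int) \<and> 2 \<le> k - 1 \<and> q 2 = int (nat (k - 1))" using q2 k3 by simp
        show ?thesis using main[OF En, of "nat (k - 1)", rule_format, of 2 "d + 1", OF h] that by blast
      qed
      have X: "(succE ^^ (nat (k - 1) - 1)) (nextE (d + 1)) = Omega E k d"
      proof -
        obtain N where N: "nat (k - 1) = Suc N" using k3 by (cases "nat (k - 1)") auto
        have "(succE ^^ (nat (k - 1) - 1)) (nextE (d + 1)) = (succE ^^ N) (succE d)"
          unfolding N succE_def by simp
        also have "\<dots> = (succE ^^ nat (k - 1)) d" unfolding N by (simp only: funpow_Suc_right o_apply)
        also have "\<dots> = Omega E k d" using Omega_pow[OF True] by simp
        finally show ?thesis .
      qed
      have KS: "(crazy_knight (cyc_k_diag n k) n n R C ^^ Suc s) (d, d)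
          = (crazy_knight (cyc_k_diag n k) n n R C ^^ s) (ck.cell n (d + 1) 2)" for s
        by (simp only: funpow_Suc_right o_apply K1)
      have L: "(LEAST s::nat. s \<ge> 1 \<and> (crazy_knight (cyc_k_diag n k) n n R C ^^ s) (d, d) \<in> main_diag n) = Suc m"
      proof (rule Least_equality)
        show "1 \<le> Suc m \<and> (crazy_knight (cyc_k_diag n k) n n R C ^^ Suc m) (d, d) \<in> main_diag n"
          using KS[of m] m(2) cdiag by simp
      next
        fix y assume y: "1 \<le> y \<and> (crazy_knight (cyc_k_diag n k) n n R C ^^ y) (d, d) \<in> main_diag n"
        show "Suc m \<le> y"
        proof (rule ccontr)
          assume "\<not> Suc m \<le> y"
          then have ym: "y \<le> m" by simp
          obtain y' where y': "y = Suc y'" using y by (cases y) auto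
          show False
          proof (cases "y' = 0")
            case True
            have "ck.cell n (d + 1) 2 \<notin> main_diag n" using cell_diag[of 2 "d + 1"] k3 by simp
            then show False using y y' True KS[of 0] by simp
          next
            case False
            then show False using m(3) y y' ym KS[of y'] by simp
          qed
        qed
      qed
      have "S_D n k E d = wrap n (Omega E k d - k + 1)" using True unfolding S_D_def Theta_def
        by (simp add: algebra_simps)
      then show ?thesis unfolding first_return_def L using KS[of m] m(2) X by (simp add: cell_def)
    qed
  qed
qed


end
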